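(* For each user $n$, both $-\lim_{\rho\to\infty}\frac{\log\Pr(\rho (Z^{(n)})^2<\tilde\gamma_{OMA})}{\log\rho}$ and $-\lim_{\rho\to\infty}\frac{\log\Pr(\rho (Z^{(n)}_c)^2<\tilde\gamma_{OMA})}{\log\rho}$ exist and equal $m_h+m_sK$.
   Context: Fix integers $N\ge1$, $K\ge1$, $b\ge2$ and a real $\beta\in(0,1]$. Let $m_G,m_g,m_h\ge 1/2$ with $m_G\neq m_g$; put $m_s=\min\{m_G,m_g\}$. For $n=1,\dots,N$ and $k=1,\dots,K$ let $h_n,G_k^n,g_k^n$ be mutually independent complex random variables with $|G_k^n|$, $|g_k^n|$, $|h_n|$ having the Nakagami density $f(x)=\frac{2m^m}{\Gamma(m)}x^{2m-1}e^{-mx^2}$ ($x\ge0$) with $m=m_G$, $m_g$, $m_h$ respectively. Let $\Delta=2\pi/2^b$; set $\bar\theta_k^n=\arg(h_n)-\arg(G_k^ng_k^n)$, $\hat\theta_k^n=\Delta(\lfloor\bar\theta_k^n/\Delta\rfloor+\tfrac12)$, $\epsilon_k^n=\hat\theta_k^n-\bar\theta_k^n$. Define $Z^{(n)}=\big||h_n|+\beta\sum_{k=1}^K|G_k^n||g_k^n|e^{j\epsilon_k^n}\big|$ and $Z_c^{(n)}=|h_n|+\beta\sum_{k=1}^K|G_k^n||g_k^n|$. $\tilde\gamma_{OMA}=2^{N\tilde R}-1$ for a target rate $\tilde R>0$; $\rho>0$ is the transmit SNR. *)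

theory Defs
  imports "HOL-Probability.Probability"
begin

definition nakagami_pdf :: "real \<Rightarrow> real \<Rightarrow> real" where
  "nakagami_pdf m x =
     (if x \<ge> 0 then 2 * m powr m / Gamma m * x powr (2 * m - 1) * exp (- m * x\<^sup>2) else 0)"

datatype chan_id = Hc nat | BigG nat nat | SmallG nat nat

text \<open>The family of all channel coefficients; G k n and g k n stand for G_k^n, g_k^n.\<close>
fun chan :: "(nat \<Rightarrow> 'a \<Rightarrow> complex) \<Rightarrow> (nat \<Rightarrow> nat \<Rightarrow> 'a \<Rightarrow> complex) \<Rightarrow>
     (nat \<Rightarrow> nat \<Rightarrow> 'a \<Rightarrow> complex) \<Rightarrow> chan_id \<Rightarrow> 'a \<Rightarrow> complex" where
  "chan h G g (Hc n) = h n"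
| "chan h G g (BigG k n) = G k n"
| "chan h G g (SmallG k n) = g k n"

definition chan_ids :: "nat \<Rightarrow> nat \<Rightarrow> chan_id set" where
  "chan_ids N K = Hc ` {1..N} \<union> (\<lambda>(k, n). BigG k n) ` ({1..K} \<times> {1..N})
                  \<union> (\<lambda>(k, n). SmallG k n) ` ({1..K} \<times> {1..N})"

text \<open>Phase quantisation error epsilon = theta_hat - theta_bar with b-bit phase resolution.\<close>
definition quant_err :: "nat \<Rightarrow> complex \<Rightarrow> complex \<Rightarrow> complex \<Rightarrow> real" where
  "quant_err b hv Gv gv =
     (let \<theta> = Arg hv - Arg (Gv * gv); \<Delta> = 2 * pi / 2 ^ b
      in \<Delta> * (real_of_int \<lfloor>\<theta> / \<Delta>\<rfloor> + 1 / 2) - \<theta>)"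

text \<open>Z^(n) with discrete phase shifts, and Z_c^(n) with continuous (ideal) phase shifts.\<close>
definition Zq :: "nat \<Rightarrow> nat \<Rightarrow> real \<Rightarrow> (nat \<Rightarrow> 'a \<Rightarrow> complex) \<Rightarrow> (nat \<Rightarrow> nat \<Rightarrow> 'a \<Rightarrow> complex) \<Rightarrow>
     (nat \<Rightarrow> nat \<Rightarrow> 'a \<Rightarrow> complex) \<Rightarrow> nat \<Rightarrow> 'a \<Rightarrow> real" where
  "Zq K b \<beta> h G g n \<omega> =
     cmod (complex_of_real (cmod (h n \<omega>)) + complex_of_real \<beta> *
       (\<Sum>k\<in>{1..K}. complex_of_real (cmod (G k n \<omega>) * cmod (g k n \<omega>))
                     * cis (quant_err b (h n \<omega>) (G k n \<omega>) (g k n \<omega>))))"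

definition Zc :: "nat \<Rightarrow> real \<Rightarrow> (nat \<Rightarrow> 'a \<Rightarrow> complex) \<Rightarrow> (nat \<Rightarrow> nat \<Rightarrow> 'a \<Rightarrow> complex) \<Rightarrow>
     (nat \<Rightarrow> nat \<Rightarrow> 'a \<Rightarrow> complex) \<Rightarrow> nat \<Rightarrow> 'a \<Rightarrow> real" where
  "Zc K \<beta> h G g n \<omega> = cmod (h n \<omega>) + \<beta> * (\<Sum>k\<in>{1..K}. cmod (G k n \<omega>) * cmod (g k n \<omega>))"

end

theory Submission
  imports Defs
begin

lemma nak_nonneg: "m > 0 \<Longrightarrow> 0 \<le> nakagami_pdf m x"
  by (auto simp: nakagami_pdf_def)

lemma nak_tail_upper:
  assumes P: "prob_space M" and m: "m \<ge> 1/2"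
    and D: "distributed M lborel X (\<lambda>x. ennreal (nakagami_pdf m x))" and u: "u > 0"
  shows "measure M {\<omega>\<in>space M. X \<omega> < u} \<le> (2 * m powr m / Gamma m) * u powr (2*m)"
proof -
  interpret prob_space M by (rule P)
  define c where "c = 2 * m powr m / Gamma m"
  have c0: "c > 0" using m by (auto simp: c_def intro!: Gamma_real_pos)
  have "emeasure M (X -` {..<u} \<inter> space M) = (\<integral>\<^sup>+x. ennreal (nakagami_pdf m x) * indicator {..<u} x \<partial>lborel)"
    by (rule distributed_emeasure[OF D]) simp
  also have "\<dots> \<le> (\<integral>\<^sup>+x. ennreal (c * u powr (2*m-1)) * indicator {0..u} x \<partial>lborel)"
  proof (rule nn_integral_mono)
    fix x
    show "ennreal (nakagami_pdf m x) * indicator {..<u} x \<le> ennreal (c * u powr (2*m-1)) * indicator {0..u} x"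
    proof (cases "0 \<le> x \<and> x < u")
      case True
      have "x powr (2*m-1) \<le> u powr (2*m-1)" using True m by (intro powr_mono2) auto
      moreover have "exp (- m * x\<^sup>2) \<le> 1" using m by auto
      ultimately have "c * x powr (2*m-1) * exp (- m * x\<^sup>2) \<le> c * u powr (2*m-1) * 1"
        using c0 by (intro mult_mono mult_left_mono) auto
      then have "nakagami_pdf m x \<le> c * u powr (2*m-1)"
        using True unfolding nakagami_pdf_def c_def by simp
      then show ?thesis using True by (auto simp: indicator_def ennreal_leI)
    next
      case False
      then show ?thesis by (auto simp: indicator_def nakagami_pdf_def)
    qed
  qed
  also have "\<dots> = ennreal (c * u powr (2*m-1)) * ennreal u"
    using u by (subst nn_integral_cmult_indicator) auto
  also have "\<dots> = ennreal (c * u powr (2*m))"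
    using u c0 by (simp add: ennreal_mult'[symmetric] powr_diff mult.assoc)
  finally have "ennreal (measure M (X -` {..<u} \<inter> space M)) \<le> ennreal (c * u powr (2*m))"
    by (simp add: emeasure_eq_measure)
  then have "measure M (X -` {..<u} \<inter> space M) \<le> c * u powr (2*m)"
    using c0 u by (simp add: ennreal_le_iff)
  moreover have "X -` {..<u} \<inter> space M = {\<omega>\<in>space M. X \<omega> < u}" by auto
  ultimately show ?thesis by (simp add: c_def)
qed


lemma nak_tail_lower:
  assumes P: "prob_space M" and m: "m \<ge> 1/2"
    and D: "distributed M lborel X (\<lambda>x. ennreal (nakagami_pdf m x))" and u: "u > 0" "u \<le> 1"
  shows "(2 * m powr m / Gamma m) * exp (-m) * (u/2) powr (2*m) \<le> measure M {\<omega>\<in>space M. X \<omega> < u}"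
proof -
  interpret prob_space M by (rule P)
  define c where "c = 2 * m powr m / Gamma m"
  have c0: "c > 0" using m by (auto simp: c_def intro!: Gamma_real_pos)
  define K where "K = c * (u/2) powr (2*m-1) * exp (-m)"
  have K0: "K \<ge> 0" using c0 by (simp add: K_def)
  have "ennreal (K * (u/2)) = ennreal K * ennreal (u - u/2)"
    using K0 u by (simp add: ennreal_mult'[symmetric])
  also have "\<dots> = (\<integral>\<^sup>+x. ennreal K * indicator {u/2..u} x \<partial>lborel)"
    using u by (subst nn_integral_cmult_indicator) auto
  also have "\<dots> \<le> (\<integral>\<^sup>+x. ennreal (nakagami_pdf m x) * indicator {..<u} x \<partial>lborel)"
  proof (rule nn_integral_mono_AE)
    have "AE x in lborel. x \<noteq> u" by (rule AE_lborel_singleton)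
    then show "AE x in lborel. ennreal K * indicator {u/2..u} x \<le> ennreal (nakagami_pdf m x) * indicator {..<u} x"
    proof eventually_elim
      fix x assume xu: "x \<noteq> u"
      show "ennreal K * indicator {u/2..u} x \<le> ennreal (nakagami_pdf m x) * indicator {..<u} x"
      proof (cases "u/2 \<le> x \<and> x \<le> u")
        case True
        with xu have T: "u/2 \<le> x" "x < u" by auto
        have "(u/2) powr (2*m-1) \<le> x powr (2*m-1)" using T u m by (intro powr_mono2) auto
        moreover have "exp (-m) \<le> exp (- m * x\<^sup>2)"
        proof -
          have "x\<^sup>2 \<le> 1" using T u by (intro power_le_one) auto
          then have "m * x\<^sup>2 \<le> m" using m by (simp add: mult_left_le)
          then show ?thesis by simp
        qed
        ultimately have "c * (u/2) powr (2*m-1) * exp (-m) \<le> c * x powr (2*m-1) * exp (- m * x\<^sup>2)"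
          using c0 by (intro mult_mono mult_left_mono) auto
        then have "K \<le> nakagami_pdf m x"
          using T u unfolding nakagami_pdf_def K_def c_def by simp
        then show ?thesis using T by (auto simp: indicator_def ennreal_leI)
      next
        case False
        then show ?thesis by (auto simp: indicator_def)
      qed
    qed
  qed
  also have "\<dots> = emeasure M (X -` {..<u} \<inter> space M)"
    by (rule distributed_emeasure[OF D, symmetric]) simp
  also have "\<dots> = ennreal (measure M {\<omega>\<in>space M. X \<omega> < u})"
    by (simp add: emeasure_eq_measure vimage_def Int_def conj_commute)
  finally have "K * (u/2) \<le> measure M {\<omega>\<in>space M. X \<omega> < u}"
    by (simp add: ennreal_le_iff)
  moreover have "K * (u/2) = c * exp (-m) * (u/2) powr (2*m)"
    using u by (simp add: K_def powr_diff field_simps)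
  ultimately show ?thesis by (simp add: c_def)
qed




lemma dyadic_ex:
  fixes y :: real
  shows "(1/2)^J \<le> y \<Longrightarrow> y < 1 \<Longrightarrow> \<exists>j<J. (1/2)^(Suc j) \<le> y \<and> y < (1/2)^j"
proof (induction J)
  case 0 then show ?case by simp
next
  case (Suc J)
  show ?case
  proof (cases "y < (1/2)^J")
    case True then show ?thesis using Suc.prems by auto
  next
    case False
    then obtain j where "j<J" "(1/2)^(Suc j) \<le> y \<and> y < (1/2)^j" using Suc by force
    then show ?thesis by (intro exI[of _ j]) auto
  qed
qed

lemma half_pow_powr: "((1/2::real)^j) powr p = ((1/2) powr p)^j"
proof -
  have "((1/2::real)^j) powr p = ((1/2) powr real j) powr p" by (simp add: powr_realpow)
  also have "\<dots> = ((1/2) powr p) powr real j" by (simp add: powr_powr mult.commute)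
  also have "\<dots> = ((1/2) powr p)^j" by (simp add: powr_realpow)
  finally show ?thesis .
qed

lemma two_pow_powr: "((2::real)^j) powr p = (2 powr p)^j"
proof -
  have "((2::real)^j) powr p = (2 powr real j) powr p" by (simp add: powr_realpow)
  also have "\<dots> = (2 powr p) powr real j" by (simp add: powr_powr mult.commute)
  also have "\<dots> = (2 powr p)^j" by (simp add: powr_realpow)
  finally show ?thesis .
qed

lemma prod_cover:
  fixes x y s :: real
  assumes "0 \<le> x" "0 \<le> y" "x * y < s" "(1/2)^J \<le> s"
  shows "y < s \<or> x < s \<or> (\<exists>j<J. x < s * 2^(Suc j) \<and> y < (1/2)^j)"
proof (cases "y < (1/2)^J")
  case True then show ?thesis using assms by auto
next
  case F: False
  show ?thesis
  proof (cases "y < 1")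
    case False
    then have "x \<le> x * y" using assms by (simp add: mult_le_cancel_left1)
    then show ?thesis using assms by auto
  next
    case True
    then obtain j where j: "j<J" "(1/2)^(Suc j) \<le> y" "y < (1/2)^j"
      using dyadic_ex[of J y] F by auto
    have "(0::real) < (1/2)^(Suc j)" by simp
    then have ypos: "y > 0" using j(2) by linarith
    have "x < s / y" using assms ypos by (simp add: pos_less_divide_eq)
    also have "s / y \<le> s * 2^(Suc j)"
    proof -
      have "s > 0" using assms ypos by (smt (verit) mult_nonneg_nonneg)
      have "1 \<le> y * 2^(Suc j)" using j(2) by (simp add: power_divide field_simps)
      then have "s * 1 \<le> s * (y * 2^(Suc j))" using \<open>s>0\<close> by (intro mult_left_mono) auto
      then have "s \<le> s * 2^(Suc j) * y" by (simp add: mult_ac)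
      then show ?thesis using ypos by (simp add: divide_le_eq)
    qed
    finally show ?thesis using j by auto
  qed
qed


lemma prod_tail:
  assumes P: "prob_space M"
    and X: "X \<in> borel_measurable M" and Y: "Y \<in> borel_measurable M"
    and nnX: "\<And>\<omega>. \<omega> \<in> space M \<Longrightarrow> 0 \<le> X \<omega>" and nnY: "\<And>\<omega>. \<omega> \<in> space M \<Longrightarrow> 0 \<le> Y \<omega>"
    and ind: "\<And>u v. measure M {\<omega>\<in>space M. X \<omega> < u \<and> Y \<omega> < v}
                   = measure M {\<omega>\<in>space M. X \<omega> < u} * measure M {\<omega>\<in>space M. Y \<omega> < v}"
    and bX: "\<And>u. u > 0 \<Longrightarrow> measure M {\<omega>\<in>space M. X \<omega> < u} \<le> ca * u powr (2*a)"
    and bY: "\<And>u. u > 0 \<Longrightarrow> measure M {\<omega>\<in>space M. Y \<omega> < u} \<le> cb * u powr (2*b)"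
    and ab: "0 < a" "a < b" and cacb: "0 \<le> ca" "0 \<le> cb"
  shows "\<exists>C. \<forall>s. 0 < s \<longrightarrow> s \<le> 1 \<longrightarrow> measure M {\<omega>\<in>space M. X \<omega> * Y \<omega> < s} \<le> C * s powr (2*a)"
proof -
  interpret prob_space M by (rule P)
  define r where "r = (1/2::real) powr (2*b) * 2 powr (2*a)"
  have r_eq: "r = (1/2) powr (2*(b-a))"
    by (simp add: r_def powr_divide powr_diff right_diff_distrib)
  have r0: "0 < r" by (simp add: r_def)
  have r1: "r < 1" unfolding r_eq using ab powr_less_mono'[of "1/2::real" 0 "2*(b-a)"] by simp
  define K where "K = ca * cb * 2 powr (2*a)"
  have K0: "K \<ge> 0" using cacb by (simp add: K_def)
  define C where "C = cb + ca + K / (1 - r)"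
  show ?thesis
  proof (intro exI[of _ C] allI impI)
    fix s :: real assume s: "0 < s" "s \<le> 1"
    obtain J where J: "(1/2::real)^J < s" using real_arch_pow_inv[of s "1/2"] s by auto
    let ?A = "{\<omega>\<in>space M. Y \<omega> < s}"
    let ?B = "{\<omega>\<in>space M. X \<omega> < s}"
    let ?D = "\<lambda>j. {\<omega>\<in>space M. X \<omega> < s * 2^(Suc j) \<and> Y \<omega> < (1/2)^j}"
    have sub: "{\<omega>\<in>space M. X \<omega> * Y \<omega> < s} \<subseteq> ?A \<union> ?B \<union> (\<Union>j\<in>{..<J}. ?D j)"
      using prod_cover[of _ _ s J] nnX nnY J by fastforce
    have meas: "?A \<in> sets M" "?B \<in> sets M" "\<And>j. ?D j \<in> sets M" using X Y by measurable
    have "measure M {\<omega>\<in>space M. X \<omega> * Y \<omega> < s} \<le> measure M (?A \<union> ?B \<union> (\<Union>j\<in>{..<J}. ?D j))"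
      using meas by (intro finite_measure_mono[OF sub]) auto
    also have "\<dots> \<le> measure M ?A + measure M ?B + measure M (\<Union>j\<in>{..<J}. ?D j)"
    proof -
      have "measure M (?A \<union> ?B \<union> (\<Union>j\<in>{..<J}. ?D j)) \<le> measure M (?A \<union> ?B) + measure M (\<Union>j\<in>{..<J}. ?D j)"
        using meas by (intro measure_Un_le) auto
      moreover have "measure M (?A \<union> ?B) \<le> measure M ?A + measure M ?B"
        using meas by (intro measure_Un_le) auto
      ultimately show ?thesis by linarith
    qed
    also have "measure M (\<Union>j\<in>{..<J}. ?D j) \<le> (\<Sum>j<J. measure M (?D j))"
      using meas by (intro finite_measure_subadditive_finite) auto
    also have "(\<Sum>j<J. measure M (?D j)) \<le> (\<Sum>j<J. K * s powr (2*a) * r^j)"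
    proof (rule sum_mono)
      fix j assume "j \<in> {..<J}"
      have "measure M (?D j) = measure M {\<omega>\<in>space M. X \<omega> < s * 2^(Suc j)} * measure M {\<omega>\<in>space M. Y \<omega> < (1/2)^j}"
        by (rule ind)
      also have "\<dots> \<le> (ca * (s * 2^(Suc j)) powr (2*a)) * (cb * ((1/2)^j) powr (2*b))"
        using s cacb by (intro mult_mono bX bY) auto
      also have "\<dots> = K * s powr (2*a) * r^j"
        using s by (simp add: K_def r_def powr_mult half_pow_powr two_pow_powr power_mult_distrib mult_ac)
      finally show "measure M (?D j) \<le> K * s powr (2*a) * r^j" .
    qed
    also have "(\<Sum>j<J. K * s powr (2*a) * r^j) = K * s powr (2*a) * (\<Sum>j<J. r^j)"
      by (simp add: sum_distrib_left)
    also have "\<dots> \<le> K * s powr (2*a) * (1 / (1 - r))"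
    proof (intro mult_left_mono)
      have "(\<Sum>j<J. r^j) = (1 - r^J) / (1 - r)" using r1 by (simp add: sum_gp_strict)
      also have "\<dots> \<le> 1 / (1 - r)" using r0 r1 by (intro divide_right_mono) auto
      finally show "(\<Sum>j<J. r^j) \<le> 1 / (1 - r)" .
    qed (use K0 in auto)
    finally have 1: "measure M {\<omega>\<in>space M. X \<omega> * Y \<omega> < s} \<le> measure M ?A + measure M ?B + K * s powr (2*a) * (1 / (1 - r))"
      by simp
    have "measure M ?A \<le> cb * s powr (2*b)" using bY s by auto
    also have "\<dots> \<le> cb * s powr (2*a)" using s ab cacb by (intro mult_left_mono powr_mono') auto
    finally have 2: "measure M ?A \<le> cb * s powr (2*a)" .
    have 3: "measure M ?B \<le> ca * s powr (2*a)" using bX s by auto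
    show "measure M {\<omega>\<in>space M. X \<omega> * Y \<omega> < s} \<le> C * s powr (2*a)"
      using 1 2 3 by (simp add: C_def algebra_simps)
  qed
qed




lemma quant_err_bound:
  assumes "b \<ge> 2"
  shows "\<bar>quant_err b hv Gv gv\<bar> \<le> pi/4"
proof -
  define \<theta> where "\<theta> = Arg hv - Arg (Gv * gv)"
  define \<Delta> :: real where "\<Delta> = 2 * pi / 2 ^ b"
  have D0: "\<Delta> > 0" by (simp add: \<Delta>_def)
  define t where "t = \<theta> / \<Delta>"
  have e0: "quant_err b hv Gv gv = \<Delta> * (real_of_int \<lfloor>t\<rfloor> + 1/2) - \<theta>"
    by (simp add: quant_err_def Let_def \<theta>_def \<Delta>_def t_def)
  have "\<theta> = \<Delta> * t" using D0 by (simp add: t_def)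
  then have e: "quant_err b hv Gv gv = \<Delta> * (real_of_int \<lfloor>t\<rfloor> + 1/2 - t)"
    unfolding e0 by (simp add: algebra_simps)
  have "\<bar>real_of_int \<lfloor>t\<rfloor> + 1/2 - t\<bar> \<le> 1/2"
    using of_int_floor_le[of t] real_of_int_floor_add_one_gt[of t] by linarith
  then have "\<bar>quant_err b hv Gv gv\<bar> \<le> \<Delta> * (1/2)"
    unfolding e using D0 by (simp add: abs_mult)
  also have "\<Delta> * (1/2) \<le> pi/4"
  proof -
    have "(2::real)^2 \<le> 2^b" using assms by (intro power_increasing) auto
    then have "(4::real) \<le> 2^b" by simp
    then show ?thesis unfolding \<Delta>_def using pi_gt_zero by (simp add: field_simps)
  qed
  finally show ?thesis .
qed

lemma Zq_le_Zc:
  assumes "\<beta> \<ge> 0"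
  shows "Zq K b \<beta> h G g n \<omega> \<le> Zc K \<beta> h G g n \<omega>"
proof -
  let ?S = "\<Sum>k\<in>{1..K}. complex_of_real (cmod (G k n \<omega>) * cmod (g k n \<omega>)) * cis (quant_err b (h n \<omega>) (G k n \<omega>) (g k n \<omega>))"
  have "Zq K b \<beta> h G g n \<omega> \<le> cmod (complex_of_real (cmod (h n \<omega>))) + cmod (complex_of_real \<beta> * ?S)"
    unfolding Zq_def by (rule norm_triangle_ineq)
  also have "cmod (complex_of_real \<beta> * ?S) = \<beta> * cmod ?S" using assms by (simp add: norm_mult)
  also have "cmod ?S \<le> (\<Sum>k\<in>{1..K}. cmod (complex_of_real (cmod (G k n \<omega>) * cmod (g k n \<omega>)) * cis (quant_err b (h n \<omega>) (G k n \<omega>) (g k n \<omega>))))"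
    by (rule norm_sum)
  also have "\<dots> = (\<Sum>k\<in>{1..K}. cmod (G k n \<omega>) * cmod (g k n \<omega>))"
    by (simp add: norm_mult)
  finally show ?thesis unfolding Zc_def using assms by (simp add: mult_left_mono)
qed

lemma Zc_le_2Zq:
  assumes "\<beta> \<ge> 0" "b \<ge> 2"
  shows "Zc K \<beta> h G g n \<omega> \<le> 2 * Zq K b \<beta> h G g n \<omega>"
proof -
  let ?e = "\<lambda>k. quant_err b (h n \<omega>) (G k n \<omega>) (g k n \<omega>)"
  let ?w = "\<lambda>k. cmod (G k n \<omega>) * cmod (g k n \<omega>)"
  let ?z = "complex_of_real (cmod (h n \<omega>)) + complex_of_real \<beta> *
       (\<Sum>k\<in>{1..K}. complex_of_real (?w k) * cis (?e k))"
  have cos: "cos (?e k) \<ge> 1/2" for k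
  proof -
    have "\<bar>?e k\<bar> \<le> pi/4" by (rule quant_err_bound[OF assms(2)])
    then have "cos (pi/3) \<le> cos \<bar>?e k\<bar>" using pi_gt_zero by (intro cos_monotone_0_pi_le) auto
    then show ?thesis by (simp add: cos_60)
  qed
  have "Re ?z = cmod (h n \<omega>) + \<beta> * (\<Sum>k\<in>{1..K}. ?w k * cos (?e k))"
    by (simp add: Re_sum)
  also have "\<dots> \<ge> cmod (h n \<omega>) / 2 + \<beta> * (\<Sum>k\<in>{1..K}. ?w k * (1/2))"
  proof -
    have "(\<Sum>k\<in>{1..K}. ?w k * (1/2)) \<le> (\<Sum>k\<in>{1..K}. ?w k * cos (?e k))"
      using cos by (intro sum_mono mult_left_mono) auto
    then have "\<beta> * (\<Sum>k\<in>{1..K}. ?w k * (1/2)) \<le> \<beta> * (\<Sum>k\<in>{1..K}. ?w k * cos (?e k))"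
      using assms by (intro mult_left_mono) auto
    moreover have "cmod (h n \<omega>) / 2 \<le> cmod (h n \<omega>)" by simp
    ultimately show ?thesis by linarith
  qed
  also have "cmod (h n \<omega>) / 2 + \<beta> * (\<Sum>k\<in>{1..K}. ?w k * (1/2)) = Zc K \<beta> h G g n \<omega> / 2"
    unfolding Zc_def sum_distrib_right[symmetric] by (simp add: field_simps)
  finally have "Zc K \<beta> h G g n \<omega> / 2 \<le> Re ?z" .
  also have "Re ?z \<le> cmod ?z" by (rule complex_Re_le_cmod)
  finally show ?thesis unfolding Zq_def by simp
qed

lemma borel_measurable_Arg[measurable]: "Arg \<in> borel_measurable borel"
proof (rule measurable_discrete_difference[where X="{0}"])
  show "(\<lambda>z. if z \<in> - \<real>\<^sub>\<le>\<^sub>0 then Arg z else pi) \<in> borel_measurable borel"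
  proof (rule borel_measurable_continuous_on_if)
    show "- (\<real>\<^sub>\<le>\<^sub>0 :: complex set) \<in> sets borel" by (intro borel_open open_Compl closed_nonpos_Reals_complex)
    show "continuous_on (- \<real>\<^sub>\<le>\<^sub>0) Arg" by (rule continuous_on_Arg)
  qed (auto intro: continuous_intros)
  show "countable {0::complex}" by simp
  fix z :: complex assume "z \<notin> {0}"
  then show "(if z \<in> - \<real>\<^sub>\<le>\<^sub>0 then Arg z else pi) = Arg z"
  proof (cases "z \<in> - \<real>\<^sub>\<le>\<^sub>0")
    case False
    then have "Re z \<le> 0" "Im z = 0" "z \<noteq> 0" using \<open>z \<notin> {0}\<close> by (auto simp: complex_nonpos_Reals_iff)
    then have "Re z < 0" by (metis complex.expand order_le_less zero_complex.simps)
    then show ?thesis using False \<open>z \<noteq> 0\<close> \<open>Im z = 0\<close> using Im_Ln_eq_pi[of z] by (simp add: Arg_def)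
  qed simp
qed auto




lemma limit_from_bounds:
  fixes p :: "real \<Rightarrow> real"
  assumes A: "A > 0"
    and ev: "\<forall>\<^sub>F \<rho> in at_top. A * \<rho> powr (-d) \<le> p \<rho> \<and> p \<rho> \<le> B * \<rho> powr (-d)"
  shows "((\<lambda>\<rho>. - ln (p \<rho>) / ln \<rho>) \<longlongrightarrow> d) at_top"
proof (rule tendsto_sandwich)
  have lim: "((\<lambda>\<rho>. d - ln c / ln \<rho>) \<longlongrightarrow> d) at_top" for c :: real
  proof -
    have "((\<lambda>\<rho>. ln c / ln \<rho>) \<longlongrightarrow> 0) at_top"
      by (intro tendsto_divide_0[OF tendsto_const] filterlim_at_top_imp_at_infinity ln_at_top)
    then show ?thesis using tendsto_diff[OF tendsto_const[of d]] by fastforce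
  qed
  show "((\<lambda>\<rho>. d - ln B / ln \<rho>) \<longlongrightarrow> d) at_top" by (rule lim)
  show "((\<lambda>\<rho>. d - ln A / ln \<rho>) \<longlongrightarrow> d) at_top" by (rule lim)
  have ev1: "\<forall>\<^sub>F \<rho> in at_top. (1::real) < \<rho>" by (rule eventually_gt_at_top)
  show "\<forall>\<^sub>F \<rho> in at_top. d - ln B / ln \<rho> \<le> - ln (p \<rho>) / ln \<rho>"
    using ev ev1
  proof eventually_elim
    case (elim \<rho>)
    have r0: "\<rho> > 0" "ln \<rho> > 0" using elim by auto
    have pos: "0 < A * \<rho> powr (-d)" using A r0 by simp
    then have p0: "0 < p \<rho>" using elim by linarith
    then have B0: "0 < B * \<rho> powr (-d)" using elim by linarith
    then have Bp: "B > 0" using r0 by (simp add: zero_less_mult_iff)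
    have "ln (p \<rho>) \<le> ln (B * \<rho> powr (-d))" using elim p0 by simp
    also have "\<dots> = ln B - d * ln \<rho>" using Bp r0 by (simp add: ln_mult ln_powr)
    finally have "d * ln \<rho> - ln B \<le> - ln (p \<rho>)" by linarith
    then have "(d * ln \<rho> - ln B) / ln \<rho> \<le> - ln (p \<rho>) / ln \<rho>"
      using r0 by (intro divide_right_mono) auto
    then show ?case using r0 by (simp add: diff_divide_distrib)
  qed
  show "\<forall>\<^sub>F \<rho> in at_top. - ln (p \<rho>) / ln \<rho> \<le> d - ln A / ln \<rho>"
    using ev ev1
  proof eventually_elim
    case (elim \<rho>)
    have r0: "\<rho> > 0" "ln \<rho> > 0" using elim by auto
    have pos: "0 < A * \<rho> powr (-d)" using A r0 by simp
    have "ln A - d * ln \<rho> = ln (A * \<rho> powr (-d))" using A r0 by (simp add: ln_mult ln_powr)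
    also have "\<dots> \<le> ln (p \<rho>)" using elim pos by simp
    finally have "- ln (p \<rho>) \<le> d * ln \<rho> - ln A" by linarith
    then have "- ln (p \<rho>) / ln \<rho> \<le> (d * ln \<rho> - ln A) / ln \<rho>"
      using r0 by (intro divide_right_mono) auto
    then show ?case using r0 by (simp add: diff_divide_distrib)
  qed
qed

lemma s_to_rho:
  fixes F :: "real \<Rightarrow> real"
  assumes s0: "s0 > 0" and g: "\<gamma> > 0" and d: "d \<ge> 0"
    and bnd: "\<And>s. 0 < s \<Longrightarrow> s \<le> s0 \<Longrightarrow> A * s powr (2*d) \<le> F s \<and> F s \<le> B * s powr (2*d)"
  shows "\<forall>\<^sub>F \<rho> in at_top. (A * \<gamma> powr d) * \<rho> powr (-d) \<le> F (sqrt (\<gamma>/\<rho>))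
                          \<and> F (sqrt (\<gamma>/\<rho>)) \<le> (B * \<gamma> powr d) * \<rho> powr (-d)"
proof -
  have "\<forall>\<^sub>F \<rho> in at_top. max 1 (\<gamma> / s0\<^sup>2) < \<rho>" by (rule eventually_gt_at_top)
  then show ?thesis
  proof eventually_elim
    case (elim \<rho>)
    then have r: "\<rho> > 0" "\<gamma> / s0\<^sup>2 < \<rho>" by auto
    define s where "s = sqrt (\<gamma>/\<rho>)"
    have sp: "s > 0" using g r by (simp add: s_def)
    have "\<gamma> / \<rho> < s0\<^sup>2" using r s0 g by (simp add: field_simps)
    then have "sqrt (\<gamma> / \<rho>) < sqrt (s0\<^sup>2)" by (rule real_sqrt_less_mono)
    then have "s < s0" unfolding s_def using s0 by simp
    have pw: "s powr (2*d) = \<gamma> powr d * \<rho> powr (-d)"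
    proof -
      have "s powr (2*d) = (s powr 2) powr d" by (simp add: powr_powr)
      also have "s powr 2 = \<gamma> / \<rho>" using sp g r by (simp add: s_def powr_numeral)
      also have "(\<gamma> / \<rho>) powr d = \<gamma> powr d / \<rho> powr d"
        using g r by (simp add: powr_divide)
      also have "\<dots> = \<gamma> powr d * \<rho> powr (-d)"
        by (simp add: powr_minus divide_inverse)
      finally show ?thesis .
    qed
    show ?case using bnd[OF sp] \<open>s < s0\<close> pw by (simp add: s_def[symmetric] mult.assoc)
  qed
qed

lemma (in prob_space) indep_lt:
  fixes V :: "'i \<Rightarrow> 'a \<Rightarrow> real"
  assumes ind: "indep_vars (\<lambda>_. borel) V I" and J: "J \<subseteq> I" "J \<noteq> {}" "finite J"
  shows "prob {\<omega>\<in>space M. \<forall>i\<in>J. V i \<omega> < t i} = (\<Prod>i\<in>J. prob {\<omega>\<in>space M. V i \<omega> < t i})"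
proof -
  have "prob (\<Inter>i\<in>J. V i -` {..<t i} \<inter> space M) = (\<Prod>i\<in>J. prob (V i -` {..<t i} \<inter> space M))"
    by (rule indep_varsD[OF ind]) (use J in auto)
  moreover have "(\<Inter>i\<in>J. V i -` {..<t i} \<inter> space M) = {\<omega>\<in>space M. \<forall>i\<in>J. V i \<omega> < t i}"
    using J by auto
  moreover have "\<And>i. V i -` {..<t i} \<inter> space M = {\<omega>\<in>space M. V i \<omega> < t i}" by auto
  ultimately show ?thesis by simp
qed




locale chsetup =
  fixes M :: "'a measure"
    and h :: "nat \<Rightarrow> 'a \<Rightarrow> complex"
    and G g :: "nat \<Rightarrow> nat \<Rightarrow> 'a \<Rightarrow> complex"
    and N K b n :: nat
    and \<beta> mG mg mh :: real
  assumes P: "prob_space M"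
    and N1: "N \<ge> 1" and K1: "K \<ge> 1" and b2: "b \<ge> 2"
    and beta0: "0 < \<beta>" and beta1: "\<beta> \<le> 1"
    and mG: "mG \<ge> 1/2" and mg: "mg \<ge> 1/2" and mh: "mh \<ge> 1/2" and neq: "mG \<noteq> mg"
    and indep: "prob_space.indep_vars M (\<lambda>_. borel) (chan h G g) (chan_ids N K)"
    and dist_h: "\<forall>n'\<in>{1..N}. distributed M lborel (\<lambda>\<omega>. cmod (h n' \<omega>)) (\<lambda>x. ennreal (nakagami_pdf mh x))"
    and dist_G: "\<forall>n'\<in>{1..N}. \<forall>k\<in>{1..K}.
                   distributed M lborel (\<lambda>\<omega>. cmod (G k n' \<omega>)) (\<lambda>x. ennreal (nakagami_pdf mG x))"
    and dist_g: "\<forall>n'\<in>{1..N}. \<forall>k\<in>{1..K}.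
                   distributed M lborel (\<lambda>\<omega>. cmod (g k n' \<omega>)) (\<lambda>x. ennreal (nakagami_pdf mg x))"
    and nN: "n \<in> {1..N}"
begin

sublocale prob_space M by (rule P)

definition "V i \<omega> = cmod (chan h G g i \<omega>)"
definition "ms = min mG mg"
definition "mo = max mG mg"
definition "idX k = (if mG < mg then BigG k n else SmallG k n)"
definition "idY k = (if mG < mg then SmallG k n else BigG k n)"

lemma indV: "indep_vars (\<lambda>_. borel) V (chan_ids N K)"
proof -
  have "indep_vars (\<lambda>_. borel) (\<lambda>i x. cmod (chan h G g i x)) (chan_ids N K)"
    by (rule indep_vars_compose2[OF indep]) auto
  then show ?thesis by (simp add: V_def[abs_def])
qed

lemma mem_ids: "Hc n \<in> chan_ids N K" "k \<in> {1..K} \<Longrightarrow> BigG k n \<in> chan_ids N K"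
    "k \<in> {1..K} \<Longrightarrow> SmallG k n \<in> chan_ids N K"
  using nN by (auto simp: chan_ids_def)

lemma mem_XY: "k \<in> {1..K} \<Longrightarrow> idX k \<in> chan_ids N K" "k \<in> {1..K} \<Longrightarrow> idY k \<in> chan_ids N K"
  using mem_ids by (auto simp: idX_def idY_def)

lemma rv_chan: "i \<in> chan_ids N K \<Longrightarrow> chan h G g i \<in> borel_measurable M"
  using indep unfolding indep_vars_def by auto

lemma meas_h: "h n \<in> borel_measurable M"
  using rv_chan[OF mem_ids(1)] by simp
lemma meas_G: "k \<in> {1..K} \<Longrightarrow> G k n \<in> borel_measurable M"
  using rv_chan[OF mem_ids(2)] by simp
lemma meas_g: "k \<in> {1..K} \<Longrightarrow> g k n \<in> borel_measurable M"
  using rv_chan[OF mem_ids(3)] by simp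

lemma meas_V: "i \<in> chan_ids N K \<Longrightarrow> V i \<in> borel_measurable M"
  unfolding V_def[abs_def] using rv_chan by measurable

lemma V_nonneg: "V i \<omega> \<ge> 0" by (simp add: V_def)

lemma dist_Vh: "distributed M lborel (V (Hc n)) (\<lambda>x. ennreal (nakagami_pdf mh x))"
  using dist_h nN by (simp add: V_def[abs_def])

lemma dist_VX: "k \<in> {1..K} \<Longrightarrow> distributed M lborel (V (idX k)) (\<lambda>x. ennreal (nakagami_pdf ms x))"
  using dist_G dist_g nN by (auto simp: V_def[abs_def] idX_def ms_def min_def)

lemma dist_VY: "k \<in> {1..K} \<Longrightarrow> distributed M lborel (V (idY k)) (\<lambda>x. ennreal (nakagami_pdf mo x))"
  using dist_G dist_g nN by (auto simp: V_def[abs_def] idY_def mo_def max_def)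

lemma VXY: "V (idX k) \<omega> * V (idY k) \<omega> = cmod (G k n \<omega>) * cmod (g k n \<omega>)"
  by (simp add: V_def idX_def idY_def)

lemma ms_ge: "ms \<ge> 1/2" and mo_ge: "mo \<ge> 1/2" and ms_lt: "ms < mo"
  using mG mg neq by (auto simp: ms_def mo_def)

lemma idXY_neq: "idX k \<noteq> idY k" by (simp add: idX_def idY_def)

lemma pair_bound:
  assumes k: "k \<in> {1..K}"
  shows "\<exists>C. \<forall>s. 0 < s \<longrightarrow> s \<le> 1 \<longrightarrow>
           prob {\<omega>\<in>space M. cmod (G k n \<omega>) * cmod (g k n \<omega>) < s} \<le> C * s powr (2*ms)"
proof -
  have ind: "prob {\<omega>\<in>space M. V (idX k) \<omega> < u \<and> V (idY k) \<omega> < v}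
           = prob {\<omega>\<in>space M. V (idX k) \<omega> < u} * prob {\<omega>\<in>space M. V (idY k) \<omega> < v}" for u v
  proof -
    let ?t = "\<lambda>i. if i = idX k then u else v"
    have "prob {\<omega>\<in>space M. \<forall>i\<in>{idX k, idY k}. V i \<omega> < ?t i} = (\<Prod>i\<in>{idX k, idY k}. prob {\<omega>\<in>space M. V i \<omega> < ?t i})"
      by (rule indep_lt[OF indV]) (use mem_XY[OF k] in auto)
    then show ?thesis using idXY_neq[of k] by (simp add: conj_commute)
  qed
  have "\<exists>C. \<forall>s. 0 < s \<longrightarrow> s \<le> 1 \<longrightarrow> prob {\<omega>\<in>space M. V (idX k) \<omega> * V (idY k) \<omega> < s} \<le> C * s powr (2*ms)"
  proof (rule prod_tail[OF P])
    show "V (idX k) \<in> borel_measurable M" "V (idY k) \<in> borel_measurable M"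
      using meas_V mem_XY[OF k] by auto
    show "0 \<le> V (idX k) \<omega>" "0 \<le> V (idY k) \<omega>" for \<omega> by (rule V_nonneg)+
    show "prob {\<omega>\<in>space M. V (idX k) \<omega> < u \<and> V (idY k) \<omega> < v}
           = prob {\<omega>\<in>space M. V (idX k) \<omega> < u} * prob {\<omega>\<in>space M. V (idY k) \<omega> < v}" for u v
      by (rule ind)
    show "u > 0 \<Longrightarrow> prob {\<omega>\<in>space M. V (idX k) \<omega> < u} \<le> (2 * ms powr ms / Gamma ms) * u powr (2*ms)" for u
      by (rule nak_tail_upper[OF P ms_ge dist_VX[OF k]])
    show "u > 0 \<Longrightarrow> prob {\<omega>\<in>space M. V (idY k) \<omega> < u} \<le> (2 * mo powr mo / Gamma mo) * u powr (2*mo)" for u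
      by (rule nak_tail_upper[OF P mo_ge dist_VY[OF k]])
    show "0 < ms" "ms < mo" using ms_ge ms_lt by auto
    show "0 \<le> 2 * ms powr ms / Gamma ms" "0 \<le> 2 * mo powr mo / Gamma mo"
      using ms_ge mo_ge by (auto intro!: divide_nonneg_pos Gamma_real_pos)
  qed
  then show ?thesis by (simp add: VXY)
qed

end




context chsetup
begin

definition "dd = mh + ms * real K"

lemma Zc_nonneg: "0 \<le> Zc K \<beta> h G g n \<omega>"
  unfolding Zc_def using beta0 by (intro add_nonneg_nonneg mult_nonneg_nonneg sum_nonneg) auto

lemma Zc_upper:
  "\<exists>B. \<forall>s. 0 < s \<longrightarrow> s \<le> \<beta> \<longrightarrow> prob {\<omega>\<in>space M. Zc K \<beta> h G g n \<omega> < s} \<le> B * s powr (2*dd)"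
proof -
  define Ks where "Ks j = (if j = 0 then {Hc n} else {BigG j n, SmallG j n})" for j :: nat
  have disj: "disjoint_family_on Ks {0..K}"
    unfolding disjoint_family_on_def Ks_def by auto
  have sub: "Ks j \<subseteq> chan_ids N K" if "j \<in> {0..K}" for j
    using that mem_ids by (auto simp: Ks_def)
  have ind1: "indep_vars (\<lambda>j. PiM (Ks j) (\<lambda>_. borel)) (\<lambda>j \<omega>. restrict (\<lambda>i. chan h G g i \<omega>) (Ks j)) {0..K}"
    by (rule indep_vars_restrict[OF indep sub disj])
  define Wf where "Wf j x = (if j = 0 then cmod (x (Hc n)) else cmod (x (BigG j n)) * cmod (x (SmallG j n)))"
    for j :: nat and x :: "chan_id \<Rightarrow> complex"
  have comp: "(\<lambda>x. cmod (x i)) \<in> borel_measurable (PiM (Ks j) (\<lambda>_. borel))" if "i \<in> Ks j" for i j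
  proof -
    have "(\<lambda>x. x i) \<in> measurable (PiM (Ks j) (\<lambda>_. borel)) (borel :: complex measure)"
      using measurable_component_singleton[OF that, of "\<lambda>_. borel"] by simp
    from measurable_compose[OF this borel_measurable_norm] show ?thesis by simp
  qed
  have mWf: "Wf j \<in> borel_measurable (PiM (Ks j) (\<lambda>_. borel))" for j
  proof (cases "j = 0")
    case True
    have "Hc n \<in> Ks j" using True by (simp add: Ks_def)
    moreover have "Wf j = (\<lambda>x. cmod (x (Hc n)))" using True by (simp add: Wf_def[abs_def])
    ultimately show ?thesis using comp by simp
  next
    case False
    have "BigG j n \<in> Ks j" "SmallG j n \<in> Ks j" using False by (auto simp: Ks_def)
    moreover have "Wf j = (\<lambda>x. cmod (x (BigG j n)) * cmod (x (SmallG j n)))" using False by (simp add: Wf_def[abs_def])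
    ultimately show ?thesis using comp borel_measurable_times by simp
  qed
  define W where "W j \<omega> = Wf j (restrict (\<lambda>i. chan h G g i \<omega>) (Ks j))" for j \<omega>
  have ind2: "indep_vars (\<lambda>_. borel) W {0..K}"
    unfolding W_def[abs_def] by (rule indep_vars_compose2[OF ind1 mWf])
  have W0: "W 0 \<omega> = cmod (h n \<omega>)" for \<omega> by (simp add: W_def Wf_def Ks_def)
  have Wk: "j \<noteq> 0 \<Longrightarrow> W j \<omega> = cmod (G j n \<omega>) * cmod (g j n \<omega>)" for j \<omega>
    by (simp add: W_def Wf_def Ks_def)
  have mW: "j \<in> {0..K} \<Longrightarrow> W j \<in> borel_measurable M" for j
    using ind2 unfolding indep_vars_def by auto
  have ex: "\<forall>k\<in>{1..K}. \<exists>C. \<forall>s. 0 < s \<longrightarrow> s \<le> 1 \<longrightarrow>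
           prob {\<omega>\<in>space M. cmod (G k n \<omega>) * cmod (g k n \<omega>) < s} \<le> C * s powr (2*ms)"
    using pair_bound by blast
  obtain Cf where Cf0: "\<forall>k\<in>{1..K}. \<forall>s. 0 < s \<longrightarrow> s \<le> 1 \<longrightarrow>
           prob {\<omega>\<in>space M. cmod (G k n \<omega>) * cmod (g k n \<omega>) < s} \<le> Cf k * s powr (2*ms)"
    using bchoice[OF ex] by blast
  have Cf: "prob {\<omega>\<in>space M. cmod (G k n \<omega>) * cmod (g k n \<omega>) < s} \<le> Cf k * s powr (2*ms)"
    if "k \<in> {1..K}" "0 < s" "s \<le> 1" for k s
    using Cf0 that by blast
  define ch where "ch = 2 * mh powr mh / Gamma mh"
  define B where "B = ch * (\<Prod>k\<in>{1..K}. Cf k) * (1/\<beta>) powr (2*ms*K)"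
  show ?thesis
  proof (intro exI[of _ B] allI impI)
    fix s assume s: "0 < s" "s \<le> \<beta>"
    define t where "t j = (if j = 0 then s else s / \<beta>)" for j :: nat
    have subset: "{\<omega>\<in>space M. Zc K \<beta> h G g n \<omega> < s} \<subseteq> {\<omega>\<in>space M. \<forall>j\<in>{0..K}. W j \<omega> < t j}"
    proof safe
      fix \<omega> j assume \<omega>: "\<omega> \<in> space M" "Zc K \<beta> h G g n \<omega> < s" and j: "j \<in> {0..K}"
      have S0: "0 \<le> (\<Sum>k\<in>{1..K}. cmod (G k n \<omega>) * cmod (g k n \<omega>))" by (intro sum_nonneg) auto
      have hn: "0 \<le> cmod (h n \<omega>)" by simp
      have bS: "0 \<le> \<beta> * (\<Sum>k\<in>{1..K}. cmod (G k n \<omega>) * cmod (g k n \<omega>))"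
        using S0 beta0 by simp
      have Zs: "cmod (h n \<omega>) + \<beta> * (\<Sum>k\<in>{1..K}. cmod (G k n \<omega>) * cmod (g k n \<omega>)) < s"
        using \<omega>(2) unfolding Zc_def .
      show "W j \<omega> < t j"
      proof (cases "j = 0")
        case True
        have "cmod (h n \<omega>) < s" using Zs bS by linarith
        then show ?thesis using True by (simp add: W0 t_def)
      next
        case False
        then have jK: "j \<in> {1..K}" using j by auto
        have "cmod (G j n \<omega>) * cmod (g j n \<omega>) \<le> (\<Sum>k\<in>{1..K}. cmod (G k n \<omega>) * cmod (g k n \<omega>))"
          by (rule member_le_sum[OF jK]) auto
        then have "\<beta> * (cmod (G j n \<omega>) * cmod (g j n \<omega>)) \<le> \<beta> * (\<Sum>k\<in>{1..K}. cmod (G k n \<omega>) * cmod (g k n \<omega>))"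
          using beta0 by (intro mult_left_mono) auto
        then have "\<beta> * (cmod (G j n \<omega>) * cmod (g j n \<omega>)) < s"
          using Zs hn by linarith
        then have "(cmod (G j n \<omega>) * cmod (g j n \<omega>)) * \<beta> < s" by (simp only: mult.commute)
        then have "cmod (G j n \<omega>) * cmod (g j n \<omega>) < s / \<beta>"
          using pos_less_divide_eq[OF beta0] by blast
        then show ?thesis using False by (simp add: Wk t_def)
      qed
    qed
    have msets: "{\<omega>\<in>space M. \<forall>j\<in>{0..K}. W j \<omega> < t j} \<in> sets M"
      using mW by (intro sets.sets_Collect_finite_All) auto
    have "prob {\<omega>\<in>space M. Zc K \<beta> h G g n \<omega> < s} \<le> prob {\<omega>\<in>space M. \<forall>j\<in>{0..K}. W j \<omega> < t j}"
      by (rule finite_measure_mono[OF subset msets])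
    also have "\<dots> = (\<Prod>j\<in>{0..K}. prob {\<omega>\<in>space M. W j \<omega> < t j})"
      by (rule indep_lt[OF ind2]) auto
    also have "\<dots> = prob {\<omega>\<in>space M. W 0 \<omega> < t 0} * (\<Prod>j\<in>{1..K}. prob {\<omega>\<in>space M. W j \<omega> < t j})"
    proof -
      have "{0..K} = insert 0 {1..K}" by auto
      then show ?thesis by simp
    qed
    also have "\<dots> \<le> (ch * s powr (2*mh)) * (\<Prod>j\<in>{1..K}. Cf j * (s/\<beta>) powr (2*ms))"
    proof -
      have a: "prob {\<omega>\<in>space M. W 0 \<omega> < t 0} \<le> ch * s powr (2*mh)"
        using nak_tail_upper[OF P mh dist_Vh s(1)] by (simp add: W0 t_def V_def ch_def)
      have b: "(\<Prod>j\<in>{1..K}. prob {\<omega>\<in>space M. W j \<omega> < t j}) \<le> (\<Prod>j\<in>{1..K}. Cf j * (s/\<beta>) powr (2*ms))"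
      proof (rule prod_mono)
        fix j assume j: "j \<in> {1..K}"
        have "s / \<beta> \<le> 1" using s beta0 by simp
        then have "prob {\<omega>\<in>space M. W j \<omega> < t j} \<le> Cf j * (s/\<beta>) powr (2*ms)"
          using Cf[OF j] s beta0 j by (simp add: Wk t_def)
        then show "0 \<le> prob {\<omega>\<in>space M. W j \<omega> < t j} \<and> prob {\<omega>\<in>space M. W j \<omega> < t j} \<le> Cf j * (s/\<beta>) powr (2*ms)"
          by simp
      qed
      have c: "0 \<le> ch * s powr (2*mh)" using mh by (simp add: ch_def Gamma_real_pos)
      have d: "0 \<le> (\<Prod>j\<in>{1..K}. prob {\<omega>\<in>space M. W j \<omega> < t j})" by (rule prod_nonneg) simp
      show ?thesis using mult_mono[OF a b c d] .
    qed
    also have "\<dots> = B * s powr (2*dd)"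
    proof -
      have "(\<Prod>j\<in>{1..K}. Cf j * (s/\<beta>) powr (2*ms)) = (\<Prod>j\<in>{1..K}. Cf j) * ((s/\<beta>) powr (2*ms))^K"
        by (simp add: prod.distrib)
      also have "((s/\<beta>) powr (2*ms))^K = (s/\<beta>) powr (2*ms*K)"
        using s beta0 by (simp add: powr_realpow[symmetric] powr_powr)
      also have "\<dots> = s powr (2*ms*K) * (1/\<beta>) powr (2*ms*K)"
        using s beta0 by (simp add: powr_mult[symmetric])
      finally have 1: "(\<Prod>j\<in>{1..K}. Cf j * (s/\<beta>) powr (2*ms)) = (\<Prod>j\<in>{1..K}. Cf j) * (s powr (2*ms*K) * (1/\<beta>) powr (2*ms*K))" .
      have 2: "s powr (2*dd) = s powr (2*mh) * s powr (2*ms*K)"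
        by (simp add: dd_def powr_add[symmetric] algebra_simps)
      show ?thesis unfolding 1 2 B_def by (simp add: mult_ac)
    qed
    finally show "prob {\<omega>\<in>space M. Zc K \<beta> h G g n \<omega> < s} \<le> B * s powr (2*dd)" .
  qed
qed

end




context chsetup
begin

lemma Zc_meas: "(\<lambda>\<omega>. Zc K \<beta> h G g n \<omega>) \<in> borel_measurable M"
  unfolding Zc_def using meas_h meas_G meas_g
  by (intro borel_measurable_add borel_measurable_times borel_measurable_const borel_measurable_sum
        borel_measurable_norm[THEN measurable_compose[rotated]]) auto

lemma inj_idX: "inj_on idX {1..K}" and inj_idY: "inj_on idY {1..K}"
  by (auto simp: inj_on_def idX_def idY_def split: if_splits)

lemma Zc_lower:
  "\<exists>A>0. \<forall>s. 0 < s \<longrightarrow> s \<le> \<beta> \<longrightarrow> A * s powr (2*dd) \<le> prob {\<omega>\<in>space M. Zc K \<beta> h G g n \<omega> < s}"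
proof -
  define Lh where "Lh = 2 * mh powr mh / Gamma mh * exp (-mh)"
  define Ls where "Ls = 2 * ms powr ms / Gamma ms * exp (-ms)"
  define Lo where "Lo = 2 * mo powr mo / Gamma mo * exp (-mo)"
  have L0: "Lh > 0" "Ls > 0" "Lo > 0" using mh ms_ge mo_ge by (auto simp: Lh_def Ls_def Lo_def intro!: Gamma_real_pos divide_pos_pos)
  define A where "A = Lh * (1/4) powr (2*mh) * (Ls * (1/(4*\<beta>*K)) powr (2*ms))^K * (Lo * (1/2) powr (2*mo))^K"
  have A0: "A > 0" using L0 beta0 K1 by (simp add: A_def)
  show ?thesis
  proof (intro exI[of _ A] conjI allI impI A0)
    fix s assume s: "0 < s" "s \<le> \<beta>"
    define J where "J = insert (Hc n) (idX ` {1..K} \<union> idY ` {1..K})"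
    define t where "t i = (if i = Hc n then s/2 else if i \<in> idX ` {1..K} then s/(2*\<beta>*K) else 1)" for i
    have JI: "J \<subseteq> chan_ids N K" using mem_ids mem_XY by (auto simp: J_def)
    have finJ: "finite J" by (simp add: J_def)
    have HnXY: "Hc n \<notin> idX ` {1..K} \<union> idY ` {1..K}" by (auto simp: idX_def idY_def)
    have XYdisj: "idX ` {1..K} \<inter> idY ` {1..K} = {}" by (auto simp: idX_def idY_def)
    have tH: "t (Hc n) = s/2" by (simp add: t_def)
    have tX: "k \<in> {1..K} \<Longrightarrow> t (idX k) = s/(2*\<beta>*K)" for k by (auto simp: t_def idX_def)
    have tY: "k \<in> {1..K} \<Longrightarrow> t (idY k) = 1" for k using XYdisj by (auto simp: t_def idX_def idY_def)
    have subset: "{\<omega>\<in>space M. \<forall>i\<in>J. V i \<omega> < t i} \<subseteq> {\<omega>\<in>space M. Zc K \<beta> h G g n \<omega> < s}"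
    proof safe
      fix \<omega> assume \<omega>: "\<omega> \<in> space M" "\<forall>i\<in>J. V i \<omega> < t i"
      have hs: "cmod (h n \<omega>) < s/2" using \<omega>(2) tH by (auto simp: J_def V_def)
      have pk: "cmod (G k n \<omega>) * cmod (g k n \<omega>) \<le> s/(2*\<beta>*K)" if k: "k \<in> {1..K}" for k
      proof -
        have "idX k \<in> J" "idY k \<in> J" using k by (auto simp: J_def)
        then have x: "V (idX k) \<omega> < s/(2*\<beta>*K)" and y: "V (idY k) \<omega> < 1"
          using \<omega>(2) tX[OF k] tY[OF k] by auto
        have "V (idX k) \<omega> * V (idY k) \<omega> \<le> V (idX k) \<omega> * 1"
          using y V_nonneg by (intro mult_left_mono) auto
        then show ?thesis using x VXY by (metis less_imp_le mult.right_neutral order_trans)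
      qed
      have "(\<Sum>k\<in>{1..K}. cmod (G k n \<omega>) * cmod (g k n \<omega>)) \<le> (\<Sum>k\<in>{1..K}. s/(2*\<beta>*K))"
        by (rule sum_mono) (rule pk)
      also have "\<dots> = s / (2*\<beta>)" using K1 by simp
      finally have "\<beta> * (\<Sum>k\<in>{1..K}. cmod (G k n \<omega>) * cmod (g k n \<omega>)) \<le> \<beta> * (s / (2*\<beta>))"
        using beta0 by (intro mult_left_mono) auto
      also have "\<beta> * (s / (2*\<beta>)) = s/2" using beta0 by simp
      finally show "Zc K \<beta> h G g n \<omega> < s" using hs unfolding Zc_def by linarith
    qed
    have "prob {\<omega>\<in>space M. \<forall>i\<in>J. V i \<omega> < t i} = (\<Prod>i\<in>J. prob {\<omega>\<in>space M. V i \<omega> < t i})"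
      by (rule indep_lt[OF indV JI]) (auto simp: J_def finJ)
    also have "\<dots> = prob {\<omega>\<in>space M. V (Hc n) \<omega> < s/2}
        * (\<Prod>k\<in>{1..K}. prob {\<omega>\<in>space M. V (idX k) \<omega> < s/(2*\<beta>*K)})
        * (\<Prod>k\<in>{1..K}. prob {\<omega>\<in>space M. V (idY k) \<omega> < 1})"
    proof -
      let ?f = "\<lambda>i. prob {\<omega>\<in>space M. V i \<omega> < t i}"
      have "prod ?f J = ?f (Hc n) * prod ?f (idX ` {1..K} \<union> idY ` {1..K})"
        unfolding J_def using HnXY by (simp add: prod.insert)
      also have "prod ?f (idX ` {1..K} \<union> idY ` {1..K}) = prod ?f (idX ` {1..K}) * prod ?f (idY ` {1..K})"
        using XYdisj by (intro prod.union_disjoint) auto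
      also have "prod ?f (idX ` {1..K}) = (\<Prod>k\<in>{1..K}. ?f (idX k))"
        using inj_idX by (simp add: prod.reindex)
      also have "prod ?f (idY ` {1..K}) = (\<Prod>k\<in>{1..K}. ?f (idY k))"
        using inj_idY by (simp add: prod.reindex)
      finally show ?thesis using tH tX tY by (simp add: mult.assoc)
    qed
    also have "\<dots> \<ge> (Lh * (s/2/2) powr (2*mh)) * (\<Prod>k\<in>{1..K}. Ls * (s/(2*\<beta>*K)/2) powr (2*ms))
                    * (\<Prod>k\<in>{1..K}. Lo * (1/2) powr (2*mo))"
    proof -
      have a: "Lh * (s/2/2) powr (2*mh) \<le> prob {\<omega>\<in>space M. V (Hc n) \<omega> < s/2}"
        using nak_tail_lower[OF P mh dist_Vh, of "s/2"] s beta1 by (simp add: Lh_def)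
      have b: "(\<Prod>k\<in>{1..K}. Ls * (s/(2*\<beta>*K)/2) powr (2*ms)) \<le> (\<Prod>k\<in>{1..K}. prob {\<omega>\<in>space M. V (idX k) \<omega> < s/(2*\<beta>*K)})"
      proof (rule prod_mono)
        fix k assume k: "k \<in> {1..K}"
        have "s/(2*\<beta>*K) \<le> 1"
        proof -
          have "s \<le> 2*\<beta>*K" using s beta0 K1 by (smt (verit) mult_le_cancel_left1 of_nat_1 of_nat_mono)
          then show ?thesis using beta0 K1 by simp
        qed
        then have "Ls * (s/(2*\<beta>*K)/2) powr (2*ms) \<le> prob {\<omega>\<in>space M. V (idX k) \<omega> < s/(2*\<beta>*K)}"
          using nak_tail_lower[OF P ms_ge dist_VX[OF k], of "s/(2*\<beta>*K)"] s beta0 K1 by (simp add: Ls_def)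
        then show "0 \<le> Ls * (s/(2*\<beta>*K)/2) powr (2*ms) \<and> Ls * (s/(2*\<beta>*K)/2) powr (2*ms) \<le> prob {\<omega>\<in>space M. V (idX k) \<omega> < s/(2*\<beta>*K)}"
          using L0 by simp
      qed
      have c: "(\<Prod>k\<in>{1..K}. Lo * (1/2) powr (2*mo)) \<le> (\<Prod>k\<in>{1..K}. prob {\<omega>\<in>space M. V (idY k) \<omega> < 1})"
      proof (rule prod_mono)
        fix k assume k: "k \<in> {1..K}"
        have "Lo * (1/2) powr (2*mo) \<le> prob {\<omega>\<in>space M. V (idY k) \<omega> < 1}"
          using nak_tail_lower[OF P mo_ge dist_VY[OF k], of 1] by (simp add: Lo_def)
        then show "0 \<le> Lo * (1/2) powr (2*mo) \<and> Lo * (1/2) powr (2*mo) \<le> prob {\<omega>\<in>space M. V (idY k) \<omega> < 1}"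
          using L0 by simp
      qed
      have n1: "0 \<le> Lh * (s/2/2) powr (2*mh)" using L0 by simp
      have n2: "0 \<le> (\<Prod>k\<in>{1..K}. Ls * (s/(2*\<beta>*K)/2) powr (2*ms))" using L0 by (intro prod_nonneg) simp
      have n3: "0 \<le> (\<Prod>k\<in>{1..K}. Lo * (1/2) powr (2*mo))" using L0 by (intro prod_nonneg) simp
      have ab: "(Lh * (s/2/2) powr (2*mh)) * (\<Prod>k\<in>{1..K}. Ls * (s/(2*\<beta>*K)/2) powr (2*ms))
          \<le> prob {\<omega>\<in>space M. V (Hc n) \<omega> < s/2} * (\<Prod>k\<in>{1..K}. prob {\<omega>\<in>space M. V (idX k) \<omega> < s/(2*\<beta>*K)})"
        using mult_mono[OF a b measure_nonneg n2] .
      have n4: "0 \<le> prob {\<omega>\<in>space M. V (Hc n) \<omega> < s/2} * (\<Prod>k\<in>{1..K}. prob {\<omega>\<in>space M. V (idX k) \<omega> < s/(2*\<beta>*K)})"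
        by (simp add: prod_nonneg)
      show ?thesis using mult_mono[OF ab c n4 n3] by simp
    qed
    also have "(Lh * (s/2/2) powr (2*mh)) * (\<Prod>k\<in>{1..K}. Ls * (s/(2*\<beta>*K)/2) powr (2*ms))
                    * (\<Prod>k\<in>{1..K}. Lo * (1/2) powr (2*mo)) = A * s powr (2*dd)"
    proof -
      have 1: "(s/2/2) powr (2*mh) = (1/4) powr (2*mh) * s powr (2*mh)"
        using s by (simp add: powr_mult[symmetric])
      have 2: "(s/(2*\<beta>*K)/2) powr (2*ms) = (1/(4*\<beta>*K)) powr (2*ms) * s powr (2*ms)"
        using s beta0 by (simp add: powr_mult[symmetric] mult.assoc)
      have 3: "(s powr (2*ms))^K = s powr (2*ms*K)"
        using s by (simp add: powr_realpow[symmetric] powr_powr)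
      have 4: "s powr (2*dd) = s powr (2*mh) * s powr (2*ms*K)"
        by (simp add: dd_def powr_add[symmetric] algebra_simps)
      have 5: "(\<Prod>k\<in>{1..K}. Ls * ((1/(4*\<beta>*K)) powr (2*ms) * s powr (2*ms)))
          = (Ls * (1/(4*\<beta>*K)) powr (2*ms))^K * s powr (2*ms*K)"
        unfolding 3[symmetric] by (simp add: power_mult_distrib mult.assoc)
      show ?thesis unfolding 1 2 4 5 A_def by (simp add: mult_ac)
    qed
    finally have "A * s powr (2*dd) \<le> prob {\<omega>\<in>space M. \<forall>i\<in>J. V i \<omega> < t i}" .
    also have "\<dots> \<le> prob {\<omega>\<in>space M. Zc K \<beta> h G g n \<omega> < s}"
      using Zc_meas by (intro finite_measure_mono[OF subset]) measurable
    finally show "A * s powr (2*dd) \<le> prob {\<omega>\<in>space M. Zc K \<beta> h G g n \<omega> < s}" .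
  qed
qed

end




context chsetup
begin

lemma dd_pos: "dd > 0" using mh ms_ge K1 by (simp add: dd_def add_pos_nonneg)

lemma borel_measurable_cis_fun[measurable]: "cis \<in> borel_measurable borel"
  by (rule borel_measurable_continuous_onI) (use continuous_on_cis[OF continuous_on_id] in simp)

lemma Zq_nonneg: "0 \<le> Zq K b \<beta> h G g n \<omega>" by (simp add: Zq_def)

lemma Zq_meas: "(\<lambda>\<omega>. Zq K b \<beta> h G g n \<omega>) \<in> borel_measurable M"
proof -
  have mq: "(\<lambda>\<omega>. quant_err b (h n \<omega>) (G k n \<omega>) (g k n \<omega>)) \<in> borel_measurable M" if k: "k \<in> {1..K}" for k
    using meas_h meas_G[OF k] meas_g[OF k] unfolding quant_err_def Let_def by measurable
  have mt: "(\<lambda>\<omega>. complex_of_real (cmod (G k n \<omega>) * cmod (g k n \<omega>)) * cis (quant_err b (h n \<omega>) (G k n \<omega>) (g k n \<omega>)))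
      \<in> borel_measurable M" if k: "k \<in> {1..K}" for k
    using meas_G[OF k] meas_g[OF k] mq[OF k] by measurable
  have ms: "(\<lambda>\<omega>. \<Sum>k\<in>{1..K}. complex_of_real (cmod (G k n \<omega>) * cmod (g k n \<omega>)) * cis (quant_err b (h n \<omega>) (G k n \<omega>) (g k n \<omega>)))
      \<in> borel_measurable M"
    by (rule borel_measurable_sum) (rule mt)
  show ?thesis
    unfolding Zq_def using meas_h ms by measurable
qed

lemma bounds_gen:
  fixes Z :: "'a \<Rightarrow> real"
  assumes nn: "\<And>\<omega>. 0 \<le> Z \<omega>" and g: "\<gamma> > 0"
    and bnd: "\<And>s. 0 < s \<Longrightarrow> s \<le> s0 \<Longrightarrow> A * s powr (2*dd) \<le> prob {\<omega>\<in>space M. Z \<omega> < s}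
                    \<and> prob {\<omega>\<in>space M. Z \<omega> < s} \<le> B * s powr (2*dd)"
    and A: "A > 0" and s0: "s0 > 0"
  shows "((\<lambda>\<rho>. - ln (prob {\<omega>\<in>space M. \<rho> * (Z \<omega>)\<^sup>2 < \<gamma>}) / ln \<rho>) \<longlongrightarrow> dd) at_top"
proof (rule limit_from_bounds[where A="A * \<gamma> powr dd" and B="B * \<gamma> powr dd"])
  show "A * \<gamma> powr dd > 0" using A g by simp
  have ev: "\<forall>\<^sub>F \<rho> in at_top. (A * \<gamma> powr dd) * \<rho> powr (-dd) \<le> prob {\<omega>\<in>space M. Z \<omega> < sqrt (\<gamma>/\<rho>)}
                          \<and> prob {\<omega>\<in>space M. Z \<omega> < sqrt (\<gamma>/\<rho>)} \<le> (B * \<gamma> powr dd) * \<rho> powr (-dd)"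
    by (rule s_to_rho[OF s0 g]) (use dd_pos bnd in auto)
  have "\<forall>\<^sub>F \<rho> in at_top. (0::real) < \<rho>" by (rule eventually_gt_at_top)
  with ev show "\<forall>\<^sub>F \<rho> in at_top. (A * \<gamma> powr dd) * \<rho> powr (-dd) \<le> prob {\<omega>\<in>space M. \<rho> * (Z \<omega>)\<^sup>2 < \<gamma>}
                          \<and> prob {\<omega>\<in>space M. \<rho> * (Z \<omega>)\<^sup>2 < \<gamma>} \<le> (B * \<gamma> powr dd) * \<rho> powr (-dd)"
  proof eventually_elim
    case (elim \<rho>)
    have "\<rho> * (Z \<omega>)\<^sup>2 < \<gamma> \<longleftrightarrow> Z \<omega> < sqrt (\<gamma>/\<rho>)" for \<omega>
    proof -
      have "\<rho> * (Z \<omega>)\<^sup>2 < \<gamma> \<longleftrightarrow> (Z \<omega>)\<^sup>2 < \<gamma>/\<rho>" using elim(2) by (simp add: pos_less_divide_eq mult.commute)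
      also have "\<dots> \<longleftrightarrow> sqrt ((Z \<omega>)\<^sup>2) < sqrt (\<gamma>/\<rho>)" by (simp only: real_sqrt_less_iff)
      also have "sqrt ((Z \<omega>)\<^sup>2) = Z \<omega>" using nn by simp
      finally show ?thesis .
    qed
    then have "{\<omega>\<in>space M. \<rho> * (Z \<omega>)\<^sup>2 < \<gamma>} = {\<omega>\<in>space M. Z \<omega> < sqrt (\<gamma>/\<rho>)}" by auto
    then show ?case using elim(1) by simp
  qed
qed

lemma Zc_bounds: "\<exists>A B. A > 0 \<and> (\<forall>s. 0 < s \<longrightarrow> s \<le> \<beta>/2 \<longrightarrow>
    A * s powr (2*dd) \<le> prob {\<omega>\<in>space M. Zc K \<beta> h G g n \<omega> < s} \<and>
    prob {\<omega>\<in>space M. Zc K \<beta> h G g n \<omega> < s} \<le> B * s powr (2*dd) \<and>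
    A * s powr (2*dd) \<le> prob {\<omega>\<in>space M. Zq K b \<beta> h G g n \<omega> < s} \<and>
    prob {\<omega>\<in>space M. Zq K b \<beta> h G g n \<omega> < s} \<le> (B * 2 powr (2*dd)) * s powr (2*dd))"
proof -
  obtain A where A: "A > 0" "\<And>s. 0 < s \<Longrightarrow> s \<le> \<beta> \<Longrightarrow> A * s powr (2*dd) \<le> prob {\<omega>\<in>space M. Zc K \<beta> h G g n \<omega> < s}"
    using Zc_lower by blast
  obtain B where B: "\<And>s. 0 < s \<Longrightarrow> s \<le> \<beta> \<Longrightarrow> prob {\<omega>\<in>space M. Zc K \<beta> h G g n \<omega> < s} \<le> B * s powr (2*dd)"
    using Zc_upper by blast
  have main: "\<forall>s. 0 < s \<longrightarrow> s \<le> \<beta>/2 \<longrightarrow>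
    A * s powr (2*dd) \<le> prob {\<omega>\<in>space M. Zc K \<beta> h G g n \<omega> < s} \<and>
    prob {\<omega>\<in>space M. Zc K \<beta> h G g n \<omega> < s} \<le> B * s powr (2*dd) \<and>
    A * s powr (2*dd) \<le> prob {\<omega>\<in>space M. Zq K b \<beta> h G g n \<omega> < s} \<and>
    prob {\<omega>\<in>space M. Zq K b \<beta> h G g n \<omega> < s} \<le> (B * 2 powr (2*dd)) * s powr (2*dd)"
  proof (intro allI impI)
    fix s assume s: "0 < s" "s \<le> \<beta>/2"
    then have s': "s \<le> \<beta>" using beta0 by simp
    have c1: "A * s powr (2*dd) \<le> prob {\<omega>\<in>space M. Zc K \<beta> h G g n \<omega> < s}" using A(2) s s' by simp
    have c2: "prob {\<omega>\<in>space M. Zc K \<beta> h G g n \<omega> < s} \<le> B * s powr (2*dd)" using B s s' by simp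
    have "prob {\<omega>\<in>space M. Zc K \<beta> h G g n \<omega> < s} \<le> prob {\<omega>\<in>space M. Zq K b \<beta> h G g n \<omega> < s}"
    proof (rule finite_measure_mono)
      show "{\<omega>\<in>space M. Zc K \<beta> h G g n \<omega> < s} \<subseteq> {\<omega>\<in>space M. Zq K b \<beta> h G g n \<omega> < s}"
        using Zq_le_Zc[of \<beta> K b h G g n] beta0 by (auto intro: le_less_trans)
      show "{\<omega>\<in>space M. Zq K b \<beta> h G g n \<omega> < s} \<in> sets M" using Zq_meas by measurable
    qed
    then have c3: "A * s powr (2*dd) \<le> prob {\<omega>\<in>space M. Zq K b \<beta> h G g n \<omega> < s}"
      using c1 by linarith
    have "prob {\<omega>\<in>space M. Zq K b \<beta> h G g n \<omega> < s} \<le> prob {\<omega>\<in>space M. Zc K \<beta> h G g n \<omega> < (2 * s)}"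
    proof (rule finite_measure_mono)
      show "{\<omega>\<in>space M. Zq K b \<beta> h G g n \<omega> < s} \<subseteq> {\<omega>\<in>space M. Zc K \<beta> h G g n \<omega> < (2 * s)}"
      proof safe
        fix \<omega> assume "\<omega> \<in> space M" "Zq K b \<beta> h G g n \<omega> < s"
        moreover have "Zc K \<beta> h G g n \<omega> \<le> 2 * Zq K b \<beta> h G g n \<omega>"
          using Zc_le_2Zq[of \<beta> b K h G g n \<omega>] beta0 b2 by simp
        ultimately show "Zc K \<beta> h G g n \<omega> < 2 * s" by linarith
      qed
      show "{\<omega>\<in>space M. Zc K \<beta> h G g n \<omega> < (2 * s)} \<in> sets M" using Zc_meas by measurable
    qed
    also have "\<dots> \<le> B * (2 * s) powr (2*dd)" using B[of "2 * s"] s by simp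
    also have "\<dots> = (B * 2 powr (2*dd)) * s powr (2*dd)" using s by (simp add: powr_mult)
    finally have c4: "prob {\<omega>\<in>space M. Zq K b \<beta> h G g n \<omega> < s} \<le> (B * 2 powr (2*dd)) * s powr (2*dd)" .
    show "A * s powr (2*dd) \<le> prob {\<omega>\<in>space M. Zc K \<beta> h G g n \<omega> < s} \<and>
    prob {\<omega>\<in>space M. Zc K \<beta> h G g n \<omega> < s} \<le> B * s powr (2*dd) \<and>
    A * s powr (2*dd) \<le> prob {\<omega>\<in>space M. Zq K b \<beta> h G g n \<omega> < s} \<and>
    prob {\<omega>\<in>space M. Zq K b \<beta> h G g n \<omega> < s} \<le> (B * 2 powr (2*dd)) * s powr (2*dd)"
      using c1 c2 c3 c4 by blast
  qed
  show ?thesis using A(1) main by blast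
qed

lemma main_result:
  assumes g: "\<gamma> > 0"
  shows "((\<lambda>\<rho>. - ln (prob {\<omega>\<in>space M. \<rho> * (Zq K b \<beta> h G g n \<omega>)\<^sup>2 < \<gamma>}) / ln \<rho>) \<longlongrightarrow> dd) at_top
       \<and> ((\<lambda>\<rho>. - ln (prob {\<omega>\<in>space M. \<rho> * (Zc K \<beta> h G g n \<omega>)\<^sup>2 < \<gamma>}) / ln \<rho>) \<longlongrightarrow> dd) at_top"
proof -
  obtain A B where AB: "A > 0" "\<And>s. 0 < s \<Longrightarrow> s \<le> \<beta>/2 \<Longrightarrow>
    A * s powr (2*dd) \<le> prob {\<omega>\<in>space M. Zc K \<beta> h G g n \<omega> < s} \<and>
    prob {\<omega>\<in>space M. Zc K \<beta> h G g n \<omega> < s} \<le> B * s powr (2*dd) \<and>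
    A * s powr (2*dd) \<le> prob {\<omega>\<in>space M. Zq K b \<beta> h G g n \<omega> < s} \<and>
    prob {\<omega>\<in>space M. Zq K b \<beta> h G g n \<omega> < s} \<le> (B * 2 powr (2*dd)) * s powr (2*dd)"
    using Zc_bounds by blast
  have s0: "\<beta>/2 > 0" using beta0 by simp
  show ?thesis
  proof
    show "((\<lambda>\<rho>. - ln (prob {\<omega>\<in>space M. \<rho> * (Zq K b \<beta> h G g n \<omega>)\<^sup>2 < \<gamma>}) / ln \<rho>) \<longlongrightarrow> dd) at_top"
      by (rule bounds_gen[OF _ g _ AB(1) s0]) (use AB(2) Zq_nonneg in auto)
    show "((\<lambda>\<rho>. - ln (prob {\<omega>\<in>space M. \<rho> * (Zc K \<beta> h G g n \<omega>)\<^sup>2 < \<gamma>}) / ln \<rho>) \<longlongrightarrow> dd) at_top"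
      by (rule bounds_gen[OF _ g _ AB(1) s0]) (use AB(2) Zc_nonneg in auto)
  qed
qed

end

theorem corollary4:
  fixes M :: "'a measure"
    and h :: "nat \<Rightarrow> 'a \<Rightarrow> complex"
    and G g :: "nat \<Rightarrow> nat \<Rightarrow> 'a \<Rightarrow> complex"
    and N K b n :: nat
    and \<beta> mG mg mh R :: real
  assumes "prob_space M"
    and "N \<ge> 1" and "K \<ge> 1" and "b \<ge> 2"
    and "0 < \<beta>" and "\<beta> \<le> 1"
    and "mG \<ge> 1/2" and "mg \<ge> 1/2" and "mh \<ge> 1/2" and "mG \<noteq> mg"
    and "R > 0"
    and indep: "prob_space.indep_vars M (\<lambda>_. borel) (chan h G g) (chan_ids N K)"
    and dist_h: "\<forall>n'\<in>{1..N}. distributed M lborel (\<lambda>\<omega>. cmod (h n' \<omega>)) (\<lambda>x. ennreal (nakagami_pdf mh x))"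
    and dist_G: "\<forall>n'\<in>{1..N}. \<forall>k\<in>{1..K}.
                   distributed M lborel (\<lambda>\<omega>. cmod (G k n' \<omega>)) (\<lambda>x. ennreal (nakagami_pdf mG x))"
    and dist_g: "\<forall>n'\<in>{1..N}. \<forall>k\<in>{1..K}.
                   distributed M lborel (\<lambda>\<omega>. cmod (g k n' \<omega>)) (\<lambda>x. ennreal (nakagami_pdf mg x))"
    and "n \<in> {1..N}"
  shows "((\<lambda>\<rho>. - ln (measure M {\<omega> \<in> space M. \<rho> * (Zq K b \<beta> h G g n \<omega>)\<^sup>2 < 2 powr (real N * R) - 1})
                  / ln \<rho>) \<longlongrightarrow> mh + min mG mg * real K) at_top
       \<and> ((\<lambda>\<rho>. - ln (measure M {\<omega> \<in> space M. \<rho> * (Zc K \<beta> h G g n \<omega>)\<^sup>2 < 2 powr (real N * R) - 1})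
                  / ln \<rho>) \<longlongrightarrow> mh + min mG mg * real K) at_top"
proof -
  interpret chsetup M h G g N K b n \<beta> mG mg mh
    by (rule chsetup.intro[OF assms(1-10) assms(12-16)])
  have "real N * R > 0" using assms by simp
  then have g: "2 powr (real N * R) - 1 > 0" by simp
  from main_result[OF g] show ?thesis by (simp add: dd_def ms_def)
qed


end
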